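(* Let $P=\{p_1,\dots,p_n\}$ be a set of $n$ distinct points in the plane and, for $\varepsilon>0$, let $f$ be the stacking order of $\mathcal{D}(\varepsilon P)$ given by $f(D(\varepsilon p_i))=i$ for $i=1,\dots,n$. Then $$\lim_{\varepsilon\to 0}\mathrm{vis}(\mathcal{D}(\varepsilon P),f)=\sum_{i=1}^n \tau_i,$$ where $\tau_1=2\pi$, and for $i\ge 2$: $\tau_i=0$ if $p_i\in\mathrm{conv}\{p_1,\dots,p_{i-1}\}$, and otherwise $\tau_i$ is the external angle of the convex set $\mathrm{conv}\{p_1,\dots,p_i\}$ at its vertex $p_i$.
   Context: For a point $p$ in the plane, $D(p)$ denotes the closed disk of radius $1$ centered at $p$, and for a finite point set $Q$, $\mathcal{D}(Q)=\{D(q): q\in Q\}$; $\varepsilon P=\{\varepsilon p: p\in P\}$ where $\varepsilon(x,y)=(\varepsilon x,\varepsilon y)$. A stacking order of a finite collection $\mathcal{D}$ of $n$ distinct unit disks is a bijection $f:\mathcal{D}\to\{1,\dots,n\}$; $f(D)$ is regarded as the height of $D$, and the arrangement is viewed from below. A point $x$ on the boundary circle of $D\in\mathcal{D}$ is visible if $x$ does not lie in any disk $D'\in\mathcal{D}$ with $f(D')<f(D)$. The visible perimeter $\mathrm{vis}(\mathcal{D},f)$ is the total length of all visible boundary points, summed over all disks. The external angle at a vertex $p_i$ is $\pi$ minus the interior angle at $p_i$; equivalently, it is the angle between the outward unit normals of the two sides meeting at $p_i$. If $\mathrm{conv}\{p_1,\dots,p_i\}$ is a segment with endpoint $p_i$,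 the external angle at $p_i$ is $\pi$. *)

theory Defs
  imports "HOL-Analysis.Analysis"
begin

definition unit_disk :: "complex \<Rightarrow> complex set" where
  "unit_disk p = cball p 1"

text \<open>A collection of distinct unit disks is identified with the finite set Q of their centres;
  a stacking order is a bijection f from Q onto 1..card Q (f q is the height of the disk D(q)).
  The boundary circle of D(q) is parametrised by arc length t in [0, 2 pi) as q + cis t,
  so the length of the visible part is the Lebesgue measure of the set of visible parameters.\<close>

definition visible_param :: "complex set \<Rightarrow> (complex \<Rightarrow> nat) \<Rightarrow> complex \<Rightarrow> real set" where
  "visible_param Q f q = {t \<in> {0..<2*pi}. \<forall>q'\<in>Q. f q' < f q \<longrightarrow> q + cis t \<notin> unit_disk q'}"

definition vis :: "complex set \<Rightarrow> (complex \<Rightarrow> nat) \<Rightarrow> real" where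
  "vis Q f = (\<Sum>q\<in>Q. measure lborel (visible_param Q f q))"

definition scale_set :: "real \<Rightarrow> complex set \<Rightarrow> complex set" where
  "scale_set \<epsilon> P = (\<lambda>p. \<epsilon> *\<^sub>R p) ` P"

definition vec_angle :: "complex \<Rightarrow> complex \<Rightarrow> real" where
  "vec_angle u w = arccos ((u \<bullet> w) / (norm u * norm w))"

text \<open>Interior angle of a convex set K at a point v of K: the largest angle subtended at v by
  two points of K (for a convex polygon this is the angle between the two sides at the vertex v;
  for a segment with endpoint v it is 0).\<close>
definition interior_angle :: "complex set \<Rightarrow> complex \<Rightarrow> real" where
  "interior_angle K v = Sup {vec_angle (u - v) (w - v) | u w. u \<in> K \<and> w \<in> K \<and> u \<noteq> v \<and> w \<noteq> v}"

definition external_angle :: "complex set \<Rightarrow> complex \<Rightarrow> real" where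
  "external_angle K v = pi - interior_angle K v"

definition tau :: "(nat \<Rightarrow> complex) \<Rightarrow> nat \<Rightarrow> real" where
  "tau p i = (if i = 1 then 2 * pi
              else if p i \<in> convex hull (p ` {1..<i}) then 0
              else external_angle (convex hull (p ` {1..i})) (p i))"

end

theory Submission
  imports Defs
begin


lemma dist_cond:
  fixes w :: complex and e :: real
  assumes "e > 0"
  shows "(1 < cmod (cis t - e *\<^sub>R w)) \<longleftrightarrow> Re (cnj w * cis t) < e * (cmod w)^2 / 2"
proof -
  have "(cmod (cis t - e *\<^sub>R w))^2 = 1 - 2 * e * Re (cnj w * cis t) + e^2 * (cmod w)^2"
    unfolding cmod_power2 by (simp add: power2_eq_square algebra_simps sin_squared_eq)
  moreover have "(1 < cmod (cis t - e *\<^sub>R w)) \<longleftrightarrow> 1 < (cmod (cis t - e *\<^sub>R w))^2"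
    by (smt (verit, best) norm_ge_zero one_less_power power2_eq_square power_one zero_less_numeral mult_le_one)
  ultimately have "(1 < cmod (cis t - e *\<^sub>R w)) \<longleftrightarrow> 2 * e * Re (cnj w * cis t) < e^2 * (cmod w)^2" by linarith
  also have "\<dots> \<longleftrightarrow> Re (cnj w * cis t) < e * (cmod w)^2 / 2"
    using assms mult_less_cancel_left_pos[of "2*e" "Re (cnj w * cis t)" "e * (cmod w)^2 / 2"]
    by (simp add: power2_eq_square algebra_simps)
  finally show ?thesis .
qed

lemma cis_borel[measurable]: "cis \<in> borel_measurable borel"
  by (intro borel_measurable_continuous_onI continuous_intros)


lemma fin_lborel:
  fixes X :: "real set"
  assumes "X \<subseteq> {a..b}"
  shows "emeasure lborel X \<noteq> \<infinity>"
proof -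
  have "emeasure lborel X \<le> emeasure lborel {a..b}"
    using assms by (intro emeasure_mono) auto
  also have "\<dots> < \<infinity>" by (simp add: emeasure_lborel_Icc_eq)
  finally show ?thesis by simp
qed

lemma measure_lborel_transl:
  fixes X :: "real set"
  assumes "X \<in> sets borel" "(+) c ` X \<in> sets borel"
  shows "measure lborel ((+) c ` X) = measure lborel X"
proof -
  have "measure lborel ((+) c ` X) = measure lebesgue ((+) c ` X)"
    using assms by (simp add: measure_completion)
  also have "\<dots> = measure lebesgue X" by (rule measure_translation)
  also have "\<dots> = measure lborel X" using assms by (simp add: measure_completion)
  finally show ?thesis .
qed

lemma periodic_shift:
  fixes S :: "real set" and d :: real
  assumes S: "S \<in> sets borel" and per: "\<And>x. x + 2*pi \<in> S \<longleftrightarrow> x \<in> S"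
    and d: "0 \<le> d" "d < 2*pi"
  shows "measure lborel {t\<in>{0..<2*pi}. t - d \<in> S} = measure lborel {s\<in>{0..<2*pi}. s \<in> S}"
proof -
  define A where "A = {t\<in>{0..<d}. t - d \<in> S}"
  define B where "B = {t\<in>{d..<2*pi}. t - d \<in> S}"
  define A' where "A' = {s\<in>{2*pi-d..<2*pi}. s \<in> S}"
  define B' where "B' = {s\<in>{0..<2*pi-d}. s \<in> S}"
  have mA: "A \<in> sets borel" "A' \<in> sets borel" "B \<in> sets borel" "B' \<in> sets borel"
    unfolding A_def B_def A'_def B'_def using S by measurable
  have eA: "A = (+) (d - 2*pi) ` A'"
  proof (rule set_eqI, rule iffI)
    fix x assume xA: "x \<in> A"
    have x1: "x - d \<in> S" and x2: "0 \<le> x" and x3: "x < d" using xA unfolding A_def by auto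
    have "x - d + 2*pi \<in> S" using per[of "x - d"] x1 by blast
    moreover have "x - d + 2*pi = x + (2*pi - d)" by simp
    ultimately have "x + (2*pi - d) \<in> S" by simp
    moreover have "2*pi - d \<le> x + (2*pi - d)" "x + (2*pi - d) < 2*pi" using x2 x3 by linarith+
    ultimately have "x + (2*pi - d) \<in> A'" unfolding A'_def by simp
    then show "x \<in> (+) (d - 2*pi) ` A'" by (intro image_eqI[of _ _ "x + (2*pi - d)"]) auto
  next
    fix x assume "x \<in> (+) (d - 2*pi) ` A'"
    then obtain s where s: "s \<in> A'" "x = d - 2*pi + s" by auto
    have xd: "x - d = s - 2*pi" using s(2) by linarith
    have s1: "s \<in> S" and s2: "2*pi-d \<le> s" and s3: "s < 2*pi" using s(1) unfolding A'_def by auto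
    have "(s - 2*pi) + 2*pi \<in> S" using s1 by simp
    then have "s - 2*pi \<in> S" using per[of "s - 2*pi"] by blast
    then have "x - d \<in> S" using xd by simp
    moreover have "0 \<le> x" using xd s2 by linarith
    moreover have "x < d" using xd s3 by linarith
    ultimately show "x \<in> A" unfolding A_def by simp
  qed
  have eB: "B = (+) d ` B'"
  proof (rule set_eqI, rule iffI)
    fix x assume "x \<in> B"
    then have "x - d \<in> B'" unfolding B_def B'_def by auto
    then show "x \<in> (+) d ` B'" by (intro image_eqI[of _ _ "x - d"]) auto
  next
    fix x assume "x \<in> (+) d ` B'"
    then show "x \<in> B" unfolding B_def B'_def by auto
  qed
  have e1: "{t\<in>{0..<2*pi}. t - d \<in> S} = A \<union> B" unfolding A_def B_def using d by auto
  have fA: "emeasure lborel A \<noteq> \<infinity>" by (rule fin_lborel[of _ "-1" "2*pi"]) (use d in \<open>auto simp: A_def\<close>)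
  have fB: "emeasure lborel B \<noteq> \<infinity>" by (rule fin_lborel[of _ "-1" "2*pi"]) (use d in \<open>auto simp: B_def\<close>)
  have fA': "emeasure lborel A' \<noteq> \<infinity>" by (rule fin_lborel[of _ "-1" "2*pi"]) (use d in \<open>auto simp: A'_def\<close>)
  have fB': "emeasure lborel B' \<noteq> \<infinity>" by (rule fin_lborel[of _ "-1" "2*pi"]) (use d in \<open>auto simp: B'_def\<close>)
  have dAB: "A \<inter> B = {}" unfolding A_def B_def by auto
  have dAB': "A' \<inter> B' = {}" unfolding A'_def B'_def by auto
  have "measure lborel {t\<in>{0..<2*pi}. t - d \<in> S} = measure lborel (A \<union> B)" by (simp only: e1)
  also have "\<dots> = measure lborel A + measure lborel B"
    by (rule measure_Union[OF fA fB _ _ dAB]) (use mA in simp_all)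
  also have "measure lborel A = measure lborel A'"
    unfolding eA by (rule measure_lborel_transl) (use mA eA in simp_all)
  also have "measure lborel B = measure lborel B'"
    unfolding eB by (rule measure_lborel_transl) (use mA eB in simp_all)
  also have "measure lborel A' + measure lborel B' = measure lborel (A' \<union> B')"
    by (rule measure_Union[OF fA' fB' _ _ dAB', symmetric]) (use mA in simp_all)
  also have "A' \<union> B' = {s\<in>{0..<2*pi}. s \<in> S}" unfolding A'_def B'_def using d by auto
  finally show ?thesis .
qed

lemma re_cnj_cis_polar: "Re (cnj (of_real r * cis \<phi>) * cis t) = r * cos (t - \<phi>)"
  by (simp add: cos_diff algebra_simps)

lemma im_rot: "Im (of_real r * cis \<alpha> * cis c) = r * sin (\<alpha> + c)"
  by (simp add: sin_add algebra_simps)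

lemma polar_form: "z = of_real (cmod z) * cis (Arg z)"
  using rcis_cmod_Arg[of z] by (simp add: rcis_def)

lemma cos_nonpos_iff:
  assumes "-(pi/2) < x" "x < 5*pi/2"
  shows "cos x \<le> 0 \<longleftrightarrow> pi/2 \<le> x \<and> x \<le> 3*pi/2"
proof
  assume c: "cos x \<le> 0"
  have "\<not> x < pi/2" using cos_gt_zero_pi[of x] assms c by linarith
  moreover have "\<not> x > 3*pi/2"
  proof
    assume "x > 3*pi/2"
    then have "0 < cos (x - 2*pi)" using assms by (intro cos_gt_zero_pi) auto
    then show False using c by (simp add: cos_diff)
  qed
  ultimately show "pi/2 \<le> x \<and> x \<le> 3*pi/2" by linarith
next
  assume x: "pi/2 \<le> x \<and> x \<le> 3*pi/2"
  then have "0 \<le> cos (x - pi)" by (intro cos_ge_zero) auto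
  then show "cos x \<le> 0" by (simp add: cos_diff)
qed

lemma vec_angle_polar:
  assumes "r > 0" "r' > 0"
  shows "vec_angle (of_real r * cis \<theta>) (of_real r' * cis \<theta>') = arccos (cos (\<theta> - \<theta>'))"
proof -
  have n1: "norm (of_real r * cis \<theta>) = r" using assms by (simp add: norm_mult)
  have n2: "norm (of_real r' * cis \<theta>') = r'" using assms by (simp add: norm_mult)
  have "(of_real r * cis \<theta>) \<bullet> (of_real r' * cis \<theta>') = r * r' * cos (\<theta> - \<theta>')"
    by (simp add: inner_complex_def cos_diff algebra_simps)
  then show ?thesis unfolding vec_angle_def n1 n2 using assms by simp
qed

lemma cone_char:
  fixes z :: complex
  assumes "z \<noteq> 0" "-(pi/2) < a" "a \<le> b" "b < pi/2"
    and P: "Re z \<ge> 0" "Im (z * cis (-a)) \<ge> 0" "Im (z * cis (-b)) \<le> 0"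
  shows "a \<le> Arg z \<and> Arg z \<le> b"
proof -
  define r where "r = cmod z"
  define \<alpha> where "\<alpha> = Arg z"
  have r: "r > 0" using assms(1) by (simp add: r_def)
  have z: "z = of_real r * cis \<alpha>" unfolding r_def \<alpha>_def by (rule polar_form)
  have ab: "-pi < \<alpha>" "\<alpha> \<le> pi" using Arg_bounded[of z] by (auto simp: \<alpha>_def)
  have c: "cos \<alpha> \<ge> 0" using P(1) r by (simp add: z zero_le_mult_iff)
  have a1: "-(pi/2) \<le> \<alpha>"
  proof (rule ccontr)
    assume "\<not> -(pi/2) \<le> \<alpha>"
    then have "0 < cos (\<alpha> + pi)" using ab by (intro cos_gt_zero_pi) auto
    then show False using c by simp
  qed
  have a2: "\<alpha> \<le> pi/2"
  proof (rule ccontr)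
    assume "\<not> \<alpha> \<le> pi/2"
    then have "0 < cos (\<alpha> - pi)" using ab by (intro cos_gt_zero_pi) auto
    then show False using c by (simp add: cos_diff)
  qed
  have "r * sin (\<alpha> - a) \<ge> 0" using P(2) im_rot[of r \<alpha> "-a"] by (simp add: z)
  then have s1: "sin (\<alpha> - a) \<ge> 0" using r by (simp add: zero_le_mult_iff)
  have "r * sin (\<alpha> - b) \<le> 0" using P(3) im_rot[of r \<alpha> "-b"] by (simp add: z)
  then have s2: "sin (\<alpha> - b) \<le> 0" using r by (simp add: mult_le_0_iff)
  have "a \<le> \<alpha>"
  proof (rule ccontr)
    assume "\<not> a \<le> \<alpha>"
    then have "0 < sin (a - \<alpha>)" using a1 a2 assms by (intro sin_gt_zero) auto
    then show False using s1 sin_minus[of "\<alpha> - a"] by simp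
  qed
  moreover have "\<alpha> \<le> b"
  proof (rule ccontr)
    assume "\<not> \<alpha> \<le> b"
    then have "0 < sin (\<alpha> - b)" using a1 a2 assms by (intro sin_gt_zero) auto
    then show False using s2 by simp
  qed
  ultimately show ?thesis by (simp add: \<alpha>_def)
qed

lemma cone_char_conv:
  fixes r \<beta> :: real
  assumes "r \<ge> 0" "-(pi/2) < a" "a \<le> \<beta>" "\<beta> \<le> b" "b < pi/2"
  defines "z \<equiv> of_real r * cis \<beta>"
  shows "Re z \<ge> 0" "Im (z * cis (-a)) \<ge> 0" "Im (z * cis (-b)) \<le> 0"
proof -
  have "cos \<beta> \<ge> 0" using assms by (intro cos_ge_zero) auto
  then show "Re z \<ge> 0" using assms by (simp add: z_def)
  have "sin (\<beta> - a) \<ge> 0" using assms by (intro sin_ge_zero) auto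
  then show "Im (z * cis (-a)) \<ge> 0" using assms im_rot[of r \<beta> "-a"] by (simp add: z_def)
  have "sin (b - \<beta>) \<ge> 0" using assms by (intro sin_ge_zero) auto
  then have "sin (\<beta> - b) \<le> 0" using sin_minus[of "b - \<beta>"] by simp
  then show "Im (z * cis (-b)) \<le> 0" using assms im_rot[of r \<beta> "-b"] by (simp add: z_def mult_le_0_iff)
qed

lemma null_zero_set:
  assumes "w \<noteq> 0"
  shows "{t. Re (cnj w * cis t) = 0} \<in> null_sets lborel"
proof -
  have "{t. Re (cnj w * cis t) = 0} \<subseteq> range (\<lambda>i::int. Arg w + of_int i * (pi/2))"
  proof
    fix t assume "t \<in> {t. Re (cnj w * cis t) = 0}"
    then have "cmod w * cos (t - Arg w) = 0"
      using re_cnj_cis_polar[of "cmod w" "Arg w" t] polar_form[of w] by simp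
    then have "cos (t - Arg w) = 0" using assms by simp
    then obtain i where "t - Arg w = of_int i * (pi/2)" using cos_zero_iff_int by blast
    then show "t \<in> range (\<lambda>i::int. Arg w + of_int i * (pi/2))"
      by (intro image_eqI[of _ _ i]) auto
  qed
  moreover have "range (\<lambda>i::int. Arg w + of_int i * (pi/2)) \<in> null_sets lborel"
    by (intro countable_imp_null_set_lborel) auto
  moreover have "{t. Re (cnj w * cis t) = 0} \<in> sets lborel"
    by measurable
  ultimately show ?thesis using null_sets_subset by blast
qed

lemma measure_cone_null:
  fixes w :: "nat \<Rightarrow> complex"
  assumes "finite J" "j0 \<in> J" "w j0 \<noteq> 0"
    and zero: "\<And>t. (\<forall>j\<in>J. Re (cnj (w j) * cis t) \<le> 0) \<Longrightarrow> Re (cnj (w j0) * cis t) = 0"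
  shows "measure lborel {t\<in>{0..<2*pi}. \<forall>j\<in>J. Re (cnj (w j) * cis t) \<le> 0} = 0"
proof -
  have "{t\<in>{0..<2*pi}. \<forall>j\<in>J. Re (cnj (w j) * cis t) \<le> 0} \<subseteq> {t. Re (cnj (w j0) * cis t) = 0}"
    using zero by auto
  moreover have "{t\<in>{0..<2*pi}. \<forall>j\<in>J. Re (cnj (w j) * cis t) \<le> 0} \<in> sets lborel"
    using assms(1) by measurable
  ultimately have "{t\<in>{0..<2*pi}. \<forall>j\<in>J. Re (cnj (w j) * cis t) \<le> 0} \<in> null_sets lborel"
    using null_sets_subset null_zero_set[OF assms(3)] by blast
  then have "emeasure lborel {t\<in>{0..<2*pi}. \<forall>j\<in>J. Re (cnj (w j) * cis t) \<le> 0} = 0" by blast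
  then show ?thesis by (simp add: measure_def)
qed

lemma measure_cone_extreme:
  fixes w :: "nat \<Rightarrow> complex" and \<beta> r :: "nat \<Rightarrow> real"
  assumes J: "finite J" "J \<noteq> {}"
    and r: "\<And>j. j \<in> J \<Longrightarrow> r j > 0"
    and \<beta>: "\<And>j. j \<in> J \<Longrightarrow> -(pi/2) < \<beta> j \<and> \<beta> j < pi/2"
    and w: "\<And>j. j \<in> J \<Longrightarrow> w j = of_real (r j) * cis (\<beta> j + \<delta>)"
    and \<delta>: "-2*pi < \<delta>" "\<delta> < 2*pi"
  shows "measure lborel {t\<in>{0..<2*pi}. \<forall>j\<in>J. Re (cnj (w j) * cis t) \<le> 0}
         = pi - (Max (\<beta>`J) - Min (\<beta>`J))"
proof -
  define d where "d = (if \<delta> < 0 then \<delta> + 2*pi else \<delta>)"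
  have d: "0 \<le> d" "d < 2*pi" using \<delta> by (auto simp: d_def)
  have cd: "cos (x - \<delta>) = cos (x - d)" for x
  proof (cases "\<delta> < 0")
    case True
    have "cos (x - d) = cos ((x - \<delta>) + (-(2*pi)))" using True by (simp add: d_def algebra_simps)
    also have "\<dots> = cos (x - \<delta>)" by (simp only: cos_add) simp
    finally show ?thesis by simp
  qed (simp add: d_def)
  define S where "S = {s. \<forall>j\<in>J. cos (s - \<beta> j) \<le> 0}"
  have Sb: "S \<in> sets borel" unfolding S_def using J(1) by measurable
  have Sp: "x + 2*pi \<in> S \<longleftrightarrow> x \<in> S" for x
  proof -
    have "cos (x + 2*pi - \<beta> j) = cos (x - \<beta> j)" for j
      using cos_periodic[of "x - \<beta> j"] by (simp add: algebra_simps)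
    then show ?thesis unfolding S_def by simp
  qed
  have eq1: "{t\<in>{0..<2*pi}. \<forall>j\<in>J. Re (cnj (w j) * cis t) \<le> 0} = {t\<in>{0..<2*pi}. t - d \<in> S}"
  proof -
    have "Re (cnj (w j) * cis t) \<le> 0 \<longleftrightarrow> cos (t - d - \<beta> j) \<le> 0" if "j \<in> J" for j t
    proof -
      have "Re (cnj (w j) * cis t) = r j * cos (t - (\<beta> j + \<delta>))"
        using w[OF that] re_cnj_cis_polar by simp
      also have "cos (t - (\<beta> j + \<delta>)) = cos ((t - \<beta> j) - \<delta>)" by (simp add: algebra_simps)
      also have "\<dots> = cos ((t - \<beta> j) - d)" by (rule cd)
      also have "(t - \<beta> j) - d = t - d - \<beta> j" by simp
      finally show ?thesis using r[OF that] by (simp add: mult_le_0_iff)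
    qed
    then show ?thesis unfolding S_def by auto
  qed
  have "measure lborel {t\<in>{0..<2*pi}. t - d \<in> S} = measure lborel {s\<in>{0..<2*pi}. s \<in> S}"
    by (rule periodic_shift[OF Sb Sp d])
  also have "{s\<in>{0..<2*pi}. s \<in> S} = {Max (\<beta>`J) + pi/2 .. Min (\<beta>`J) + 3*pi/2}"
  proof -
    obtain j1 where j1: "j1 \<in> J" using J by auto
    have bM: "Max (\<beta>`J) < pi/2" using J \<beta> by (subst Max_less_iff) auto
    have bm: "Min (\<beta>`J) > -(pi/2)" using J \<beta> by (subst Min_gr_iff) auto
    have bM2: "Max (\<beta>`J) \<ge> \<beta> j1" using J j1 by (intro Max_ge) auto
    have bm2: "Min (\<beta>`J) \<le> \<beta> j1" using J j1 by (intro Min_le) auto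
    have "s \<in> S \<longleftrightarrow> (\<forall>j\<in>J. pi/2 \<le> s - \<beta> j \<and> s - \<beta> j \<le> 3*pi/2)" if s: "0 \<le> s" "s < 2*pi" for s
    proof -
      have "cos (s - \<beta> j) \<le> 0 \<longleftrightarrow> pi/2 \<le> s - \<beta> j \<and> s - \<beta> j \<le> 3*pi/2" if "j \<in> J" for j
        using \<beta>[OF that] s by (intro cos_nonpos_iff) auto
      then show ?thesis unfolding S_def by auto
    qed
    moreover have "(\<forall>j\<in>J. pi/2 \<le> s - \<beta> j \<and> s - \<beta> j \<le> 3*pi/2)
        \<longleftrightarrow> Max (\<beta>`J) + pi/2 \<le> s \<and> s \<le> Min (\<beta>`J) + 3*pi/2" for s
    proof -
      have q1: "\<And>j. (pi/2 \<le> s - \<beta> j) = (\<beta> j \<le> s - pi/2)" by linarith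
      have q2: "\<And>j. (s - \<beta> j \<le> 3*pi/2) = (s - 3*pi/2 \<le> \<beta> j)" by linarith
      have m1: "Max (\<beta>`J) \<le> s - pi/2 \<longleftrightarrow> (\<forall>j\<in>J. \<beta> j \<le> s - pi/2)" using J by (simp add: Max_le_iff)
      have m2: "s - 3*pi/2 \<le> Min (\<beta>`J) \<longleftrightarrow> (\<forall>j\<in>J. s - 3*pi/2 \<le> \<beta> j)" using J by (simp add: Min_ge_iff)
      have "(\<forall>j\<in>J. pi/2 \<le> s - \<beta> j \<and> s - \<beta> j \<le> 3*pi/2) \<longleftrightarrow>
            (\<forall>j\<in>J. \<beta> j \<le> s - pi/2) \<and> (\<forall>j\<in>J. s - 3*pi/2 \<le> \<beta> j)"
        by (simp only: q1 q2 ball_conj_distrib)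
      also have "\<dots> \<longleftrightarrow> Max (\<beta>`J) \<le> s - pi/2 \<and> s - 3*pi/2 \<le> Min (\<beta>`J)" using m1 m2 by simp
      also have "\<dots> \<longleftrightarrow> Max (\<beta>`J) + pi/2 \<le> s \<and> s \<le> Min (\<beta>`J) + 3*pi/2" by linarith
      finally show ?thesis .
    qed
    ultimately show ?thesis using bM bm bM2 bm2 by (auto simp: algebra_simps)
  qed
  also have "measure lborel {Max (\<beta>`J) + pi/2 .. Min (\<beta>`J) + 3*pi/2} = pi - (Max (\<beta>`J) - Min (\<beta>`J))"
  proof -
    have bM: "Max (\<beta>`J) < pi/2" using J \<beta> by (subst Max_less_iff) auto
    have bm: "Min (\<beta>`J) > -(pi/2)" using J \<beta> by (subst Min_gr_iff) auto
    have "Max (\<beta>`J) + pi/2 \<le> Min (\<beta>`J) + 3*pi/2" using bM bm by linarith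
    then show ?thesis by simp
  qed
  finally show ?thesis using eq1 by simp
qed

lemma re_cnj_inner: "Re (cnj w * z) = inner w z"
  by (simp add: inner_complex_def)

lemma comb_lin:
  assumes "s + t = 1"
  shows "(s *\<^sub>R x + t *\<^sub>R y - v) * k = of_real s * ((x - v) * k) + of_real t * ((y - v) * k)"
proof -
  have "of_real s * ((x - v) * k) + of_real t * ((y - v) * k)
      = (of_real s * x + of_real t * y - of_real (s + t) * v) * k" by (simp add: algebra_simps)
  also have "of_real (s + t) * v = v" using assms by simp
  finally show ?thesis by (simp add: scaleR_conv_of_real)
qed

lemma convex_re_ge: "convex {u. Re ((u - v) * k) \<ge> (0::real)}"
proof (rule convexI)
  fix x y s t :: "_" assume "x \<in> {u. Re ((u - v) * k) \<ge> (0::real)}" "y \<in> {u. Re ((u - v) * k) \<ge> (0::real)}"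
    "0 \<le> s" "0 \<le> t" "s + t = (1::real)"
  note h = this
  have "Re ((s *\<^sub>R x + t *\<^sub>R y - v) * k) = s * Re ((x - v) * k) + t * Re ((y - v) * k)"
    unfolding comb_lin[OF h(5)] by simp
  note eq = this
  have A: "Re ((x - v) * k) \<ge> 0" "Re ((y - v) * k) \<ge> 0" using h(1,2) by (simp_all only: mem_Collect_eq)
  have "s * Re ((x - v) * k) + t * Re ((y - v) * k) \<ge> 0" using A h(3,4) by (intro add_nonneg_nonneg mult_nonneg_nonneg) auto
  then show "s *\<^sub>R x + t *\<^sub>R y \<in> {u. Re ((u - v) * k) \<ge> (0::real)}"
    unfolding mem_Collect_eq eq .
qed

lemma convex_im_ge: "convex {u. Im ((u - v) * k) \<ge> (0::real)}"
proof (rule convexI)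
  fix x y s t :: "_" assume "x \<in> {u. Im ((u - v) * k) \<ge> (0::real)}" "y \<in> {u. Im ((u - v) * k) \<ge> (0::real)}"
    "0 \<le> s" "0 \<le> t" "s + t = (1::real)"
  note h = this
  have "Im ((s *\<^sub>R x + t *\<^sub>R y - v) * k) = s * Im ((x - v) * k) + t * Im ((y - v) * k)"
    unfolding comb_lin[OF h(5)] by simp
  note eq = this
  have A: "Im ((x - v) * k) \<ge> 0" "Im ((y - v) * k) \<ge> 0" using h(1,2) by (simp_all only: mem_Collect_eq)
  have "s * Im ((x - v) * k) + t * Im ((y - v) * k) \<ge> 0" using A h(3,4) by (intro add_nonneg_nonneg mult_nonneg_nonneg) auto
  then show "s *\<^sub>R x + t *\<^sub>R y \<in> {u. Im ((u - v) * k) \<ge> (0::real)}"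
    unfolding mem_Collect_eq eq .
qed

lemma convex_im_le: "convex {u. Im ((u - v) * k) \<le> (0::real)}"
proof (rule convexI)
  fix x y s t :: "_" assume "x \<in> {u. Im ((u - v) * k) \<le> (0::real)}" "y \<in> {u. Im ((u - v) * k) \<le> (0::real)}"
    "0 \<le> s" "0 \<le> t" "s + t = (1::real)"
  note h = this
  have "Im ((s *\<^sub>R x + t *\<^sub>R y - v) * k) = s * Im ((x - v) * k) + t * Im ((y - v) * k)"
    unfolding comb_lin[OF h(5)] by simp
  note eq = this
  have A: "Im ((x - v) * k) \<le> 0" "Im ((y - v) * k) \<le> 0" using h(1,2) by (simp_all only: mem_Collect_eq)
  have "s * Im ((x - v) * k) + t * Im ((y - v) * k) \<le> 0" using A h(3,4) by (intro add_nonpos_nonpos mult_nonneg_nonpos) auto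
  then show "s *\<^sub>R x + t *\<^sub>R y \<in> {u. Im ((u - v) * k) \<le> (0::real)}"
    unfolding mem_Collect_eq eq .
qed

lemma arg_re_pos:
  assumes "Re z > 0"
  shows "-(pi/2) < Arg z \<and> Arg z < pi/2"
proof -
  have z0: "z \<noteq> 0" using assms by auto
  have "Re z = Re (of_real (cmod z) * cis (Arg z))" using polar_form[of z] by metis
  then have "Re z = cmod z * cos (Arg z)" by simp
  then have c: "cos (Arg z) > 0" using assms z0 by (simp add: zero_less_mult_iff)
  have ab: "-pi < Arg z" "Arg z \<le> pi" using Arg_bounded[of z] by auto
  have "-(pi/2) < Arg z"
  proof (rule ccontr)
    assume "\<not> -(pi/2) < Arg z"
    then have "0 \<le> cos (Arg z + pi)" using ab by (intro cos_ge_zero) auto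
    then show False using c by simp
  qed
  moreover have "Arg z < pi/2"
  proof (rule ccontr)
    assume "\<not> Arg z < pi/2"
    then have "0 \<le> cos (Arg z - pi)" using ab by (intro cos_ge_zero) auto
    then show False using c by (simp add: cos_diff)
  qed
  ultimately show ?thesis by simp
qed

lemma arccos_cos_abs:
  assumes "\<bar>x\<bar> \<le> pi"
  shows "arccos (cos x) = \<bar>x\<bar>"
proof (cases "x \<ge> 0")
  case True then show ?thesis using assms arccos_cos[of x] by simp
next
  case False then show ?thesis using assms arccos_cos[of "-x"] by simp
qed

lemma tau_hull_case:
  fixes p :: "nat \<Rightarrow> complex"
  assumes inj: "inj_on p {1..i}" and hull: "p i \<in> convex hull (p ` {1..<i})"
  shows "measure lborel {t\<in>{0..<2*pi}. \<forall>j\<in>{1..<i}. Re (cnj (p j - p i) * cis t) \<le> 0} = 0"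
proof -
  define S where "S = p ` {1..<i}"
  have fin: "finite S" unfolding S_def by auto
  obtain \<mu> where \<mu>0: "\<forall>x\<in>S. 0 \<le> \<mu> x" and \<mu>1: "sum \<mu> S = 1" and \<mu>2: "(\<Sum>x\<in>S. \<mu> x *\<^sub>R x) = p i"
    using hull convex_hull_finite[OF fin] unfolding S_def by auto
  obtain x0 where x0: "x0 \<in> S" "\<mu> x0 > 0"
  proof (rule ccontr)
    assume "\<not> thesis"
    then have "\<forall>x\<in>S. \<mu> x = 0" using \<mu>0 that by force
    then have "sum \<mu> S = 0" by simp
    then show False using \<mu>1 by simp
  qed
  obtain j0 where j0: "j0 \<in> {1..<i}" "x0 = p j0" using x0 unfolding S_def by auto
  have "p j0 \<noteq> p i" using inj j0(1) by (auto dest: inj_onD)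
  have key: "(\<Sum>x\<in>S. \<mu> x *\<^sub>R (x - p i)) = 0"
  proof -
    have "(\<Sum>x\<in>S. \<mu> x *\<^sub>R (x - p i)) = (\<Sum>x\<in>S. \<mu> x *\<^sub>R x) - (\<Sum>x\<in>S. \<mu> x) *\<^sub>R p i"
      by (simp add: scaleR_diff_right sum_subtractf scaleR_sum_left)
    then show ?thesis using \<mu>1 \<mu>2 by simp
  qed
  show ?thesis
  proof (rule measure_cone_null[of "{1..<i}" j0 "\<lambda>j. p j - p i"])
    show "p j0 - p i \<noteq> 0" using \<open>p j0 \<noteq> p i\<close> by simp
    fix t assume all: "\<forall>j\<in>{1..<i}. Re (cnj (p j - p i) * cis t) \<le> 0"
    have allS: "\<forall>x\<in>S. inner (x - p i) (cis t) \<le> 0"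
    proof
      fix x assume "x \<in> S"
      then obtain j where j: "j \<in> {1..<i}" "x = p j" unfolding S_def by auto
      have "Re (cnj (p j - p i) * cis t) \<le> 0" using all j by blast
      then show "inner (x - p i) (cis t) \<le> 0" unfolding j(2) re_cnj_inner .
    qed
    define f where "f x = \<mu> x * inner (x - p i) (cis t)" for x
    have "inner (\<Sum>x\<in>S. \<mu> x *\<^sub>R (x - p i)) (cis t) = (\<Sum>x\<in>S. f x)"
      unfolding f_def by (simp only: inner_sum_left inner_scaleR_left)
    then have s0: "(\<Sum>x\<in>S. f x) = 0" unfolding key by simp
    have fn: "\<forall>x\<in>S. 0 \<le> - f x"
    proof
      fix x assume "x \<in> S"
      then have "0 \<le> \<mu> x" "inner (x - p i) (cis t) \<le> 0" using \<mu>0 allS by auto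
      then have "\<mu> x * inner (x - p i) (cis t) \<le> 0" by (rule mult_nonneg_nonpos)
      then show "0 \<le> - f x" unfolding f_def by simp
    qed
    have "(\<Sum>x\<in>S. - f x) = 0" using s0 by (simp only: sum_negf neg_equal_0_iff_equal)
    moreover have "(\<Sum>x\<in>S. - f x) = 0 \<longleftrightarrow> (\<forall>x\<in>S. - f x = 0)"
      using sum_nonneg_eq_0_iff[OF fin, of "\<lambda>x. - f x"] fn by simp
    ultimately have "\<forall>x\<in>S. - f x = 0" by simp
    then have "f x0 = 0" using x0(1) by auto
    then have "inner (x0 - p i) (cis t) = 0" using x0(2) unfolding f_def by simp
    then show "Re (cnj (p j0 - p i) * cis t) = 0" unfolding j0(2) re_cnj_inner .
  qed (use j0 in auto)
qed

lemma tau_extreme_case: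
  fixes p :: "nat \<Rightarrow> complex"
  assumes inj: "inj_on p {1..i}" and i2: "2 \<le> i"
    and notin: "p i \<notin> convex hull (p ` {1..<i})"
  shows "measure lborel {t\<in>{0..<2*pi}. \<forall>j\<in>{1..<i}. Re (cnj (p j - p i) * cis t) \<le> 0}
         = external_angle (convex hull (p ` {1..i})) (p i)"
proof -
  define J where "J = {1..<i}"
  define v where "v = p i"
  have J: "finite J" "J \<noteq> {}" using i2 by (auto simp: J_def)
  have Jsub: "J \<subseteq> {1..i}" by (auto simp: J_def)
  have vJ: "p j \<noteq> v" if "j \<in> J" for j
    using inj that i2 unfolding v_def J_def by (auto dest: inj_onD)
  have "closed (convex hull (p ` J))"
    by (intro compact_imp_closed compact_convex_hull finite_imp_compact) (use J in auto)
  then obtain c b0 where c1: "inner c v < b0" and c2: "\<forall>x\<in>convex hull (p ` J). inner c x > b0"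
    using separating_hyperplane_closed_point[of "convex hull (p ` J)" v] notin
    unfolding J_def v_def by (auto simp: convex_convex_hull)
  have pos: "inner c (p j - v) > 0" if "j \<in> J" for j
  proof -
    have "p j \<in> convex hull (p ` J)" using that by (intro hull_inc) auto
    then have "inner c (p j) > b0" using c2 by blast
    then show ?thesis using c1 by (simp add: inner_diff_right)
  qed
  obtain j1 where j1: "j1 \<in> J" using J by auto
  have c0: "c \<noteq> 0" using pos[OF j1] by auto
  define \<delta> where "\<delta> = Arg c"
  have \<delta>b: "-pi < \<delta>" "\<delta> \<le> pi" using Arg_bounded[of c] by (auto simp: \<delta>_def)
  define z where "z j = (p j - v) * cis (-\<delta>)" for j
  have cc: "cnj c = of_real (cmod c) * cis (-\<delta>)"
  proof -
    have "cnj c = cnj (of_real (cmod c) * cis \<delta>)" using polar_form[of c] by (simp add: \<delta>_def)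
    then show ?thesis by (simp add: cis_cnj)
  qed
  have Rez: "Re (z j) > 0" if "j \<in> J" for j
  proof -
    have "inner c (p j - v) = Re (cnj c * (p j - v))" by (simp only: re_cnj_inner)
    also have "\<dots> = Re (of_real (cmod c) * z j)" unfolding cc z_def by (simp add: mult_ac)
    also have "\<dots> = cmod c * Re (z j)" by simp
    finally show ?thesis using pos[OF that] c0 by (simp add: zero_less_mult_iff)
  qed
  define \<beta> where "\<beta> j = Arg (z j)" for j
  define r where "r j = cmod (z j)" for j
  have r: "r j > 0" if "j \<in> J" for j using Rez[OF that] unfolding r_def by auto
  have \<beta>: "-(pi/2) < \<beta> j \<and> \<beta> j < pi/2" if "j \<in> J" for j
    using arg_re_pos[OF Rez[OF that]] unfolding \<beta>_def .
  have zpol: "z j = of_real (r j) * cis (\<beta> j)" for j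
    unfolding r_def \<beta>_def by (rule polar_form)
  have wj: "p j - v = of_real (r j) * cis (\<beta> j + \<delta>)" for j
  proof -
    have "p j - v = z j * cis \<delta>" unfolding z_def by (simp add: mult.assoc cis_mult)
    also have "\<dots> = of_real (r j) * cis (\<beta> j + \<delta>)" unfolding zpol by (simp add: mult.assoc cis_mult)
    finally show ?thesis .
  qed
  have meas: "measure lborel {t\<in>{0..<2*pi}. \<forall>j\<in>J. Re (cnj (p j - v) * cis t) \<le> 0}
         = pi - (Max (\<beta>`J) - Min (\<beta>`J))"
    by (rule measure_cone_extreme[OF J r \<beta> wj]) (use \<delta>b in auto)
  define a where "a = Min (\<beta>`J)"
  define b where "b = Max (\<beta>`J)"
  have "a \<in> \<beta> ` J" unfolding a_def using J by (intro Min_in) auto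
  then obtain ja where ja: "ja \<in> J" "\<beta> ja = a" by auto
  have "b \<in> \<beta> ` J" unfolding b_def using J by (intro Max_in) auto
  then obtain jb where jb: "jb \<in> J" "\<beta> jb = b" by auto
  have aj: "a \<le> \<beta> j" if "j \<in> J" for j using J that unfolding a_def by (intro Min_le) auto
  have bj: "\<beta> j \<le> b" if "j \<in> J" for j using J that unfolding b_def by (intro Max_ge) auto
  have ab: "-(pi/2) < a" "a \<le> b" "b < pi/2" using \<beta>[OF ja(1)] \<beta>[OF jb(1)] ja jb aj[OF jb(1)] by auto
  define K where "K = convex hull (p ` {1..i})"
  define L where "L = {u. Re ((u - v) * cis (-\<delta>)) \<ge> 0} \<inter> {u. Im ((u - v) * (cis (-\<delta>) * cis (-a))) \<ge> 0}
      \<inter> {u. Im ((u - v) * (cis (-\<delta>) * cis (-b))) \<le> 0}"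
  have convL: "convex L" unfolding L_def
    by (intro convex_Int convex_re_ge convex_im_ge convex_im_le)
  have inL: "p j \<in> L" if "j \<in> {1..i}" for j
  proof (cases "j = i")
    case True then show ?thesis by (simp add: L_def v_def)
  next
    case False
    then have jJ: "j \<in> J" using that by (auto simp: J_def)
    have "(p j - v) * cis (-\<delta>) = of_real (r j) * cis (\<beta> j)" using zpol[of j] by (simp add: z_def)
    then have e1: "(p j - v) * (cis (-\<delta>) * cis (-a)) = of_real (r j) * cis (\<beta> j) * cis (-a)"
          "(p j - v) * (cis (-\<delta>) * cis (-b)) = of_real (r j) * cis (\<beta> j) * cis (-b)"
      by (simp_all only: mult.assoc[symmetric])
    note cc = cone_char_conv[of "r j" a "\<beta> j" b]
    have h: "0 \<le> r j" "-(pi/2) < a" "a \<le> \<beta> j" "\<beta> j \<le> b" "b < pi/2"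
      using r[OF jJ] ab aj[OF jJ] bj[OF jJ] by auto
    show ?thesis unfolding L_def mem_Collect_eq Int_iff e1 \<open>(p j - v) * cis (-\<delta>) = of_real (r j) * cis (\<beta> j)\<close>
      using cc[OF h] by simp
  qed
  have KL: "K \<subseteq> L" unfolding K_def by (rule hull_minimal) (use inL convL in auto)
  have argK: "\<exists>R \<theta>. R > 0 \<and> a \<le> \<theta> \<and> \<theta> \<le> b \<and> u - v = of_real R * cis (\<theta> + \<delta>)"
    if "u \<in> K" "u \<noteq> v" for u
  proof -
    define zu where "zu = (u - v) * cis (-\<delta>)"
    have zu0: "zu \<noteq> 0" using that by (simp add: zu_def)
    have uL: "u \<in> L" using KL that by auto
    have P: "Re zu \<ge> 0" "Im (zu * cis (-a)) \<ge> 0" "Im (zu * cis (-b)) \<le> 0"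
      using uL unfolding L_def zu_def by (simp_all add: mult.assoc)
    have A: "a \<le> Arg zu \<and> Arg zu \<le> b" using cone_char[OF zu0 ab P] .
    have "u - v = zu * cis \<delta>" unfolding zu_def by (simp add: mult.assoc cis_mult)
    also have "\<dots> = of_real (cmod zu) * cis (Arg zu + \<delta>)"
      by (subst polar_form[of zu]) (simp add: mult.assoc cis_mult)
    finally show ?thesis using A zu0 by (intro exI[of _ "cmod zu"] exI[of _ "Arg zu"]) auto
  qed
  define AS where "AS = {vec_angle (u - v) (w - v) | u w. u \<in> K \<and> w \<in> K \<and> u \<noteq> v \<and> w \<noteq> v}"
  have "Sup AS = b - a"
  proof (rule cSup_eq_maximum)
    have "p jb \<in> K" "p ja \<in> K" unfolding K_def using ja jb Jsub by (auto intro!: hull_inc)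
    moreover have "vec_angle (p jb - v) (p ja - v) = b - a"
    proof -
      have "vec_angle (p jb - v) (p ja - v) = arccos (cos ((\<beta> jb + \<delta>) - (\<beta> ja + \<delta>)))"
        unfolding wj by (rule vec_angle_polar) (use r ja jb in auto)
      also have "\<dots> = b - a" using ja jb ab by (subst arccos_cos) auto
      finally show ?thesis .
    qed
    moreover have "p jb \<noteq> v" "p ja \<noteq> v" using vJ ja jb by auto
    ultimately show "b - a \<in> AS" unfolding AS_def mem_Collect_eq
      by (intro exI[of _ "p jb"] exI[of _ "p ja"]) auto
  next
    fix x assume "x \<in> AS"
    then obtain u w where uw: "x = vec_angle (u - v) (w - v)" "u \<in> K" "w \<in> K" "u \<noteq> v" "w \<noteq> v"
      unfolding AS_def by blast
    obtain R1 \<theta>1 where 1: "R1 > 0" "a \<le> \<theta>1" "\<theta>1 \<le> b" "u - v = of_real R1 * cis (\<theta>1 + \<delta>)"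
      using argK[OF uw(2,4)] by blast
    obtain R2 \<theta>2 where 2: "R2 > 0" "a \<le> \<theta>2" "\<theta>2 \<le> b" "w - v = of_real R2 * cis (\<theta>2 + \<delta>)"
      using argK[OF uw(3,5)] by blast
    have "x = arccos (cos ((\<theta>1 + \<delta>) - (\<theta>2 + \<delta>)))"
      unfolding uw(1) 1(4) 2(4) by (rule vec_angle_polar) (use 1 2 in auto)
    also have "\<dots> = \<bar>\<theta>1 - \<theta>2\<bar>" using 1 2 ab by (subst arccos_cos_abs) auto
    also have "\<dots> \<le> b - a" using 1 2 by linarith
    finally show "x \<le> b - a" .
  qed
  then have "external_angle K v = pi - (b - a)"
    unfolding external_angle_def interior_angle_def AS_def by simp
  then show ?thesis using meas unfolding K_def J_def v_def a_def b_def by simp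
qed

lemma mono_meas:
  fixes A B :: "real set"
  assumes "A \<subseteq> B" "A \<in> sets borel" "B \<in> sets borel" "B \<subseteq> {0..2*pi}"
  shows "measure lborel A \<le> measure lborel B"
proof (rule measure_mono_fmeasurable)
  show "B \<in> fmeasurable lborel"
    using fin_lborel[OF assms(4)] assms(3) by (intro fmeasurableI) (auto simp: less_top)
qed (use assms in auto)

lemma limit_lemma:
  fixes w :: "nat \<Rightarrow> complex" and c :: "nat \<Rightarrow> real"
  assumes J: "finite J" and c: "\<And>j. j \<in> J \<Longrightarrow> c j > 0"
  shows "((\<lambda>\<epsilon>. measure lborel {t\<in>{0..<2*pi}. \<forall>j\<in>J. Re (cnj (w j) * cis t) < \<epsilon> * c j})
          \<longlongrightarrow> measure lborel {t\<in>{0..<2*pi}. \<forall>j\<in>J. Re (cnj (w j) * cis t) \<le> 0}) (at_right 0)"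
proof -
  define V where "V \<epsilon> = {t\<in>{0..<2*pi}. \<forall>j\<in>J. Re (cnj (w j) * cis t) < \<epsilon> * c j}" for \<epsilon>
  define C where "C = {t\<in>{0..<2*pi}. \<forall>j\<in>J. Re (cnj (w j) * cis t) \<le> 0}"
  have Vm: "V \<epsilon> \<in> sets borel" for \<epsilon> unfolding V_def using J by measurable
  have Cm: "C \<in> sets borel" unfolding C_def using J by measurable
  have Vsub: "V \<epsilon> \<subseteq> {0..2*pi}" for \<epsilon> unfolding V_def by auto
  have Vmono: "V \<epsilon> \<subseteq> V \<epsilon>'" if "\<epsilon> \<le> \<epsilon>'" for \<epsilon> \<epsilon>'
  proof
    fix t assume "t \<in> V \<epsilon>"
    moreover have "\<epsilon> * c j \<le> \<epsilon>' * c j" if "j \<in> J" for j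
      using c[OF that] \<open>\<epsilon> \<le> \<epsilon>'\<close> by (intro mult_right_mono) auto
    ultimately show "t \<in> V \<epsilon>'" unfolding V_def by fastforce
  qed
  have CV: "C \<subseteq> V \<epsilon>" if "\<epsilon> > 0" for \<epsilon>
  proof
    fix t assume "t \<in> C"
    moreover have "0 < \<epsilon> * c j" if "j \<in> J" for j using c[OF that] \<open>\<epsilon> > 0\<close> by simp
    ultimately show "t \<in> V \<epsilon>" unfolding V_def C_def by fastforce
  qed
  define A where "A k = V (1 / Suc k)" for k
  have decA: "decseq A" unfolding decseq_def A_def
    by (intro allI impI Vmono) (simp add: frac_le)
  have intA: "(\<Inter>k. A k) = C"
  proof
    have "C \<subseteq> A k" for k unfolding A_def by (rule CV) simp
    then show "C \<subseteq> (\<Inter>k. A k)" by auto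
  next
    show "(\<Inter>k. A k) \<subseteq> C"
    proof
      fix t assume t: "t \<in> (\<Inter>k. A k)"
      then have t0: "t \<in> {0..<2*pi}" unfolding A_def V_def by auto
      have "Re (cnj (w j) * cis t) \<le> 0" if "j \<in> J" for j
      proof (rule ccontr)
        assume "\<not> Re (cnj (w j) * cis t) \<le> 0"
        then have g: "Re (cnj (w j) * cis t) > 0" by simp
        define R where "R = Re (cnj (w j) * cis t)"
        have R: "R > 0" using g by (simp add: R_def)
        obtain k :: nat where k: "c j / R < real k" using reals_Archimedean2 by blast
        have kp: "real (Suc k) > 0" by simp
        have "t \<in> A k" using t by auto
        then have "R < 1 / real (Suc k) * c j" using that unfolding A_def V_def R_def by auto
        then have "R < c j / real (Suc k)" by simp
        then have "R * real (Suc k) < c j" using kp by (simp only: pos_less_divide_eq)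
        moreover have "c j < R * real k" using k R by (simp only: pos_divide_less_eq mult.commute)
        moreover have "R * real k \<le> R * real (Suc k)" using R by (intro mult_left_mono) auto
        ultimately show False by linarith
      qed
      then show "t \<in> C" using t0 unfolding C_def by auto
    qed
  qed
  have lim: "(\<lambda>k. measure lborel (A k)) \<longlonglongrightarrow> measure lborel C"
    unfolding intA[symmetric]
  proof (rule Lim_measure_decseq[OF _ decA])
    show "range A \<subseteq> sets lborel" using Vm by (auto simp: A_def)
    show "emeasure lborel (A k) \<noteq> \<infinity>" for k unfolding A_def by (rule fin_lborel[OF Vsub])
  qed
  show ?thesis unfolding V_def[symmetric] C_def[symmetric]
  proof (rule order_tendstoI)
    fix a assume "a < measure lborel C"
    have "eventually (\<lambda>x. x \<in> {0<..<1}) (at_right (0::real))" by (rule eventually_at_right_real) simp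
    then show "eventually (\<lambda>x. a < measure lborel (V x)) (at_right 0)"
    proof (rule eventually_mono)
      fix x :: real assume "x \<in> {0<..<1}"
      then have "measure lborel C \<le> measure lborel (V x)"
        using CV Cm Vm Vsub by (intro mono_meas) auto
      then show "a < measure lborel (V x)" using \<open>a < measure lborel C\<close> by simp
    qed
  next
    fix a assume "measure lborel C < a"
    then have "eventually (\<lambda>k. measure lborel (A k) < a) sequentially"
      by (rule order_tendstoD(2)[OF lim])
    then obtain k where k: "measure lborel (A k) < a" by (auto simp: eventually_sequentially)
    have "eventually (\<lambda>x. x \<in> {0<..<1 / Suc k}) (at_right (0::real))" by (rule eventually_at_right_real) simp
    then show "eventually (\<lambda>x. measure lborel (V x) < a) (at_right 0)"
    proof (rule eventually_mono)
      fix x :: real assume "x \<in> {0<..<1 / Suc k}"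
      then have "measure lborel (V x) \<le> measure lborel (A k)"
        unfolding A_def using Vmono Vm Vsub by (intro mono_meas) auto
      then show "measure lborel (V x) < a" using k by simp
    qed
  qed
qed

lemma tau_measure:
  fixes p :: "nat \<Rightarrow> complex"
  assumes inj: "inj_on p {1..n}" and i: "i \<in> {1..n}"
  shows "measure lborel {t\<in>{0..<2*pi}. \<forall>j\<in>{1..<i}. Re (cnj (p j - p i) * cis t) \<le> 0} = tau p i"
proof (cases "i = 1")
  case True
  have "{t\<in>{0..<2*pi}. \<forall>j\<in>{1..<i}. Re (cnj (p j - p i) * cis t) \<le> 0} = {0..<2*pi}"
    using True by auto
  then show ?thesis using True by (simp add: tau_def)
next
  case False
  then have i2: "2 \<le> i" using i by auto
  have inj': "inj_on p {1..i}" using inj i by (auto intro: inj_on_subset)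
  show ?thesis
  proof (cases "p i \<in> convex hull (p ` {1..<i})")
    case True
    then show ?thesis using tau_hull_case[OF inj' True] False by (simp add: tau_def)
  next
    case nh: False
    then show ?thesis using tau_extreme_case[OF inj' i2 nh] False by (simp add: tau_def)
  qed
qed

lemma vis_eq:
  fixes p :: "nat \<Rightarrow> complex"
  assumes inj: "inj_on p {1..n}" and e: "\<epsilon> > 0"
  shows "vis (scale_set \<epsilon> (p ` {1..n})) (\<lambda>x. inv_into {1..n} (\<lambda>i. \<epsilon> *\<^sub>R p i) x)
    = (\<Sum>i=1..n. measure lborel {t\<in>{0..<2*pi}. \<forall>j\<in>{1..<i}.
          Re (cnj (p j - p i) * cis t) < \<epsilon> * ((cmod (p j - p i))^2 / 2)})"
proof -
  define g where "g i = \<epsilon> *\<^sub>R p i" for i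
  define f where "f x = inv_into {1..n} g x" for x
  have injg: "inj_on g {1..n}"
  proof (rule inj_onI)
    fix x y assume "x \<in> {1..n}" "y \<in> {1..n}" "g x = g y"
    then show "x = y" using inj e by (auto simp: g_def dest: inj_onD)
  qed
  have sc: "scale_set \<epsilon> (p ` {1..n}) = g ` {1..n}" unfolding scale_set_def g_def by auto
  have fg: "f (g i) = i" if "i \<in> {1..n}" for i unfolding f_def using injg that by (rule inv_into_f_f)
  have vp: "visible_param (g ` {1..n}) f (g i) = {t\<in>{0..<2*pi}. \<forall>j\<in>{1..<i}.
          Re (cnj (p j - p i) * cis t) < \<epsilon> * ((cmod (p j - p i))^2 / 2)}" if i: "i \<in> {1..n}" for i
  proof -
    have "(g i + cis t \<notin> unit_disk (g j)) \<longleftrightarrow> Re (cnj (p j - p i) * cis t) < \<epsilon> * ((cmod (p j - p i))^2 / 2)" for j t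
    proof -
      have "(g i + cis t \<notin> unit_disk (g j)) \<longleftrightarrow> 1 < cmod (g j - (g i + cis t))"
        unfolding unit_disk_def mem_cball dist_norm by auto
      also have "g j - (g i + cis t) = - (cis t - \<epsilon> *\<^sub>R (p j - p i))"
        unfolding g_def by (simp add: algebra_simps)
      also have "1 < cmod (- (cis t - \<epsilon> *\<^sub>R (p j - p i))) \<longleftrightarrow> 1 < cmod (cis t - \<epsilon> *\<^sub>R (p j - p i))"
        by (simp only: norm_minus_cancel)
      also have "\<dots> \<longleftrightarrow> Re (cnj (p j - p i) * cis t) < \<epsilon> * (cmod (p j - p i))^2 / 2"
        by (rule dist_cond[OF e])
      finally show ?thesis by simp
    qed
    note iffj = this
    have A: "(\<forall>q'\<in>g`{1..n}. f q' < f (g i) \<longrightarrow> g i + cis t \<notin> unit_disk q')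
        \<longleftrightarrow> (\<forall>j\<in>{1..<i}. g i + cis t \<notin> unit_disk (g j))" for t
      using fg i by auto
    show ?thesis unfolding visible_param_def A iffj ..

  qed
  have "vis (g ` {1..n}) f = (\<Sum>i\<in>{1..n}. measure lborel (visible_param (g ` {1..n}) f (g i)))"
    unfolding vis_def by (rule sum.reindex[OF injg, unfolded comp_def])
  also have "\<dots> = (\<Sum>i=1..n. measure lborel {t\<in>{0..<2*pi}. \<forall>j\<in>{1..<i}.
          Re (cnj (p j - p i) * cis t) < \<epsilon> * ((cmod (p j - p i))^2 / 2)})"
  proof (rule sum.cong[OF refl])
    fix i assume i: "i \<in> {1..n}"
    show "measure lborel (visible_param (g ` {1..n}) f (g i)) = measure lborel {t\<in>{0..<2*pi}. \<forall>j\<in>{1..<i}.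
          Re (cnj (p j - p i) * cis t) < \<epsilon> * ((cmod (p j - p i))^2 / 2)}"
      unfolding vp[OF i] ..
  qed
  finally show ?thesis unfolding sc[symmetric] f_def g_def .
qed

theorem lemma7:
  fixes p :: "nat \<Rightarrow> complex" and n :: nat
  assumes "inj_on p {1..n}"
  shows "((\<lambda>\<epsilon>. vis (scale_set \<epsilon> (p ` {1..n}))
                    (\<lambda>x. inv_into {1..n} (\<lambda>i. \<epsilon> *\<^sub>R p i) x))
          \<longlongrightarrow> (\<Sum>i=1..n. tau p i)) (at_right 0)"
proof -
  have ev: "eventually (\<lambda>\<epsilon>. (\<Sum>i=1..n. measure lborel {t\<in>{0..<2*pi}. \<forall>j\<in>{1..<i}.
          Re (cnj (p j - p i) * cis t) < \<epsilon> * ((cmod (p j - p i))^2 / 2)})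
      = vis (scale_set \<epsilon> (p ` {1..n})) (\<lambda>x. inv_into {1..n} (\<lambda>i. \<epsilon> *\<^sub>R p i) x)) (at_right 0)"
    using eventually_at_right_real[of 0 1]
    by (rule eventually_mono) (use vis_eq[OF assms] in auto)
  have lim: "((\<lambda>\<epsilon>. (\<Sum>i=1..n. measure lborel {t\<in>{0..<2*pi}. \<forall>j\<in>{1..<i}.
          Re (cnj (p j - p i) * cis t) < \<epsilon> * ((cmod (p j - p i))^2 / 2)}))
      \<longlongrightarrow> (\<Sum>i=1..n. measure lborel {t\<in>{0..<2*pi}. \<forall>j\<in>{1..<i}. Re (cnj (p j - p i) * cis t) \<le> 0}))
      (at_right 0)"
  proof (rule tendsto_sum)
    fix i assume i: "i \<in> {1..n}"
    show "((\<lambda>\<epsilon>. measure lborel {t\<in>{0..<2*pi}. \<forall>j\<in>{1..<i}.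
          Re (cnj (p j - p i) * cis t) < \<epsilon> * ((cmod (p j - p i))^2 / 2)})
      \<longlongrightarrow> measure lborel {t\<in>{0..<2*pi}. \<forall>j\<in>{1..<i}. Re (cnj (p j - p i) * cis t) \<le> 0}) (at_right 0)"
    proof (rule limit_lemma[where w = "\<lambda>j. p j - p i" and c = "\<lambda>j. (cmod (p j - p i))^2 / 2"])
      fix j assume j: "j \<in> {1..<i}"
      then have "p j \<noteq> p i" using i assms by (auto dest: inj_onD)
      then show "0 < (cmod (p j - p i))^2 / 2" by simp
    qed simp
  qed
  have "(\<Sum>i=1..n. measure lborel {t\<in>{0..<2*pi}. \<forall>j\<in>{1..<i}. Re (cnj (p j - p i) * cis t) \<le> 0})
      = (\<Sum>i=1..n. tau p i)"
    by (rule sum.cong) (use tau_measure[OF assms] in auto)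
  then show ?thesis using Lim_transform_eventually[OF lim ev] by simp
qed
end
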